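(* Let $M$ be a closed Riemannian manifold and $\gamma$ a closed piecewise differentiable curve on $M$ of length $L$. Suppose there is a homotopy $H(t,\tau)=\gamma_\tau(t)$ of width $W$ contracting $\gamma=\gamma_0$ to a point through closed curves of length at most $L$. Then there is a homotopy contracting $\gamma$ to the constant loop at $\gamma(0)$ through loops based at $\gamma(0)$, each of length at most $L+2W$.
   Context: For a homotopy of closed curves $H(t,\tau)$ ($t$ the curve parameter, $\tau\in[0,1]$ the homotopy parameter), its width is $\sup_t \ell(\tau\mapsto H(t,\tau))$, the maximal length of the trajectory of a point of the curve during the homotopy. *)

theory Defs
  imports "HOL-Analysis.Analysis"
begin

definition partitions :: "real \<Rightarrow> real \<Rightarrow> (nat \<times> (nat \<Rightarrow> real)) set" where
  "partitions a b = {(n, p). p 0 = a \<and> p n = b \<and> (\<forall>i<n. p i \<le> p (Suc i))}"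

text \<open>Length of a curve g restricted to [a,b] (supremum of inscribed polygon lengths),
  valued in the extended reals so that non-rectifiable curves have length \<infinity>.\<close>
definition curve_length :: "real \<Rightarrow> real \<Rightarrow> (real \<Rightarrow> 'a::metric_space) \<Rightarrow> ereal" where
  "curve_length a b g =
     (SUP np \<in> partitions a b. ereal (\<Sum>i<fst np. dist (g (snd np i)) (g (snd np (Suc i)))))"

definition homotopy_width :: "(real \<times> real \<Rightarrow> 'a::metric_space) \<Rightarrow> ereal" where
  "homotopy_width H = (SUP t \<in> {0..1}. curve_length 0 1 (\<lambda>\<tau>. H (t, \<tau>)))"

end

theory Submission
  imports Defs
begin
lemma part_mono:
  assumes "(n,p) \<in> partitions a b" "i \<le> j" "j \<le> n" shows "p i \<le> p j"
  using assms(2,3)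
proof (induction j)
  case 0 then show ?case by simp
next
  case (Suc j)
  show ?case
  proof (cases "i = Suc j")
    case False
    then have "p i \<le> p j" using Suc by simp
    moreover have "p j \<le> p (Suc j)" using assms(1) Suc.prems by (auto simp: partitions_def)
    ultimately show ?thesis by simp
  qed simp
qed

lemma part_in:
  assumes "(n,p) \<in> partitions a b" "i \<le> n" shows "a \<le> p i \<and> p i \<le> b"
  using part_mono[OF assms(1), of 0 i] part_mono[OF assms(1), of i n] assms
  by (auto simp: partitions_def)

lemma cl_le:
  assumes "\<And>n p. (n,p) \<in> partitions a b \<Longrightarrow> (\<Sum>i<n. dist (g (p i)) (g (p (Suc i)))) \<le> B"
  shows "curve_length a b g \<le> ereal B"
  unfolding curve_length_def
  by (rule SUP_least) (use assms in auto)

lemma cl_ge: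
  assumes "(n,p) \<in> partitions a b"
  shows "ereal (\<Sum>i<n. dist (g (p i)) (g (p (Suc i)))) \<le> curve_length a b g"
  unfolding curve_length_def
  using SUP_upper[OF assms, of "\<lambda>np. ereal (\<Sum>i<fst np. dist (g (snd np i)) (g (snd np (Suc i))))"]
  by simp

lemma cl_cong:
  assumes "\<And>x. a \<le> x \<Longrightarrow> x \<le> b \<Longrightarrow> f x = g x"
  shows "curve_length a b f = curve_length a b g"
  unfolding curve_length_def
proof (rule SUP_cong[OF refl])
  fix np assume np: "np \<in> partitions a b"
  obtain n p where [simp]: "np = (n,p)" by (cases np)
  have "\<And>i. i \<le> n \<Longrightarrow> f (p i) = g (p i)" using part_in[of n p a b] np assms by auto
  then show "ereal (\<Sum>i<fst np. dist (f (snd np i)) (f (snd np (Suc i)))) =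
             ereal (\<Sum>i<fst np. dist (g (snd np i)) (g (snd np (Suc i))))"
    by (auto intro!: sum.cong)
qed

lemma cl_nonneg:
  assumes "a \<le> b" shows "0 \<le> curve_length a b g"
proof -
  have P: "(1::nat, \<lambda>i::nat. if i = 0 then a else b) \<in> partitions a b"
    using assms by (auto simp: partitions_def)
  show ?thesis by (rule order_trans[OF _ cl_ge[OF P, of g]]) simp
qed

lemma cl_mono_int:
  assumes "a \<le> b" "b \<le> c" shows "curve_length a b g \<le> curve_length a c g"
  unfolding curve_length_def[of a b]
proof (rule SUP_least)
  fix np assume np: "np \<in> partitions a b"
  obtain n p where [simp]: "np = (n,p)" by (cases np)
  define q where "q = (\<lambda>i. if i \<le> n then p i else c)"
  have "(Suc n, q) \<in> partitions a c"
    using np assms by (auto simp: partitions_def q_def less_Suc_eq)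
  from cl_ge[OF this, of g]
  have A: "ereal (\<Sum>i<Suc n. dist (g (q i)) (g (q (Suc i)))) \<le> curve_length a c g" .
  have B: "(\<Sum>i<Suc n. dist (g (q i)) (g (q (Suc i)))) \<ge> (\<Sum>i<n. dist (g (p i)) (g (p (Suc i))))"
    by (simp add: q_def)
  have "ereal (\<Sum>i<n. dist (g (p i)) (g (p (Suc i)))) \<le> curve_length a c g"
    by (rule order_trans[OF _ A]) (use B in simp)
  then show "ereal (\<Sum>i<fst np. dist (g (snd np i)) (g (snd np (Suc i)))) \<le> curve_length a c g"
    by simp
qed

lemma cl_split:
  assumes "a \<le> b" "b \<le> c"
  shows "curve_length a c g \<le> curve_length a b g + curve_length b c g"
  unfolding curve_length_def[of a c]
proof (rule SUP_least)
  fix np assume np: "np \<in> partitions a c"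
  obtain n p where [simp]: "np = (n,p)" by (cases np)
  define q where "q = (\<lambda>i. min b (p i))"
  define r where "r = (\<lambda>i. max b (p i))"
  have pq: "(n, q) \<in> partitions a b" using np assms by (auto simp: partitions_def q_def)
  have pr: "(n, r) \<in> partitions b c" using np assms by (auto simp: partitions_def r_def)
  have "\<And>i. i < n \<Longrightarrow> dist (g (p i)) (g (p (Suc i))) \<le>
      dist (g (q i)) (g (q (Suc i))) + dist (g (r i)) (g (r (Suc i)))"
  proof -
    fix i assume i: "i < n"
    have le: "p i \<le> p (Suc i)" using np i by (auto simp: partitions_def)
    consider "p (Suc i) \<le> b" | "b \<le> p i" | "p i \<le> b" "b \<le> p (Suc i)" by linarith
    then show "dist (g (p i)) (g (p (Suc i))) \<le>
      dist (g (q i)) (g (q (Suc i))) + dist (g (r i)) (g (r (Suc i)))"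
    proof cases
      case 1 then show ?thesis using le by (simp add: q_def r_def max_def min_def)
    next
      case 2 then show ?thesis using le by (simp add: q_def r_def max_def min_def)
    next
      case 3 then show ?thesis using le dist_triangle[of "g (p i)" "g (p (Suc i))" "g b"]
        by (simp add: q_def r_def max_def min_def)
    qed
  qed
  then have "(\<Sum>i<n. dist (g (p i)) (g (p (Suc i)))) \<le>
      (\<Sum>i<n. dist (g (q i)) (g (q (Suc i)))) + (\<Sum>i<n. dist (g (r i)) (g (r (Suc i))))"
    unfolding sum.distrib[symmetric] by (intro sum_mono) auto
  then have "ereal (\<Sum>i<n. dist (g (p i)) (g (p (Suc i)))) \<le>
      ereal (\<Sum>i<n. dist (g (q i)) (g (q (Suc i)))) + ereal (\<Sum>i<n. dist (g (r i)) (g (r (Suc i))))"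
    by simp
  also have "\<dots> \<le> curve_length a b g + curve_length b c g"
    by (rule add_mono[OF cl_ge[OF pq] cl_ge[OF pr]])
  finally show "ereal (\<Sum>i<fst np. dist (g (snd np i)) (g (snd np (Suc i)))) \<le> curve_length a b g + curve_length b c g"
    by simp
qed

lemma cl_reparam_inc:
  assumes "\<And>x y. a \<le> x \<Longrightarrow> x \<le> y \<Longrightarrow> y \<le> b \<Longrightarrow> \<phi> x \<le> \<phi> y" "\<phi> a = c" "\<phi> b = d"
  shows "curve_length a b (\<lambda>t. g (\<phi> t)) \<le> curve_length c d g"
  unfolding curve_length_def[of a b]
proof (rule SUP_least)
  fix np assume np: "np \<in> partitions a b"
  obtain n p where [simp]: "np = (n,p)" by (cases np)
  have "(n, \<lambda>i. \<phi> (p i)) \<in> partitions c d"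
    using np assms part_in[of n p a b] by (auto simp: partitions_def)
  from cl_ge[OF this, of g]
  show "ereal (\<Sum>i<fst np. dist (g (\<phi> (snd np i))) (g (\<phi> (snd np (Suc i))))) \<le> curve_length c d g"
    by simp
qed

lemma cl_reparam_dec:
  assumes "\<And>x y. a \<le> x \<Longrightarrow> x \<le> y \<Longrightarrow> y \<le> b \<Longrightarrow> \<phi> y \<le> \<phi> x" "\<phi> a = d" "\<phi> b = c"
  shows "curve_length a b (\<lambda>t. g (\<phi> t)) \<le> curve_length c d g"
  unfolding curve_length_def[of a b]
proof (rule SUP_least)
  fix np assume np: "np \<in> partitions a b"
  obtain n p where [simp]: "np = (n,p)" by (cases np)
  have "(n, \<lambda>i. \<phi> (p (n - i))) \<in> partitions c d"
  proof -
    have "\<And>i. i < n \<Longrightarrow> \<phi> (p (n - i)) \<le> \<phi> (p (n - Suc i))"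
    proof -
      fix i assume i: "i < n"
      have e: "n - i = Suc (n - Suc i)" using i by simp
      show "\<phi> (p (n - i)) \<le> \<phi> (p (n - Suc i))"
        unfolding e using np assms(1) part_in[of n p a b "n - Suc i"] part_in[of n p a b "Suc (n - Suc i)"] i
        by (auto simp: partitions_def)
    qed
    then show ?thesis using np assms by (auto simp: partitions_def)
  qed
  from cl_ge[OF this, of g]
  have "ereal (\<Sum>i<n. dist (g (\<phi> (p (n - i)))) (g (\<phi> (p (n - Suc i))))) \<le> curve_length c d g" by simp
  moreover have "(\<Sum>i<n. dist (g (\<phi> (p (n - i)))) (g (\<phi> (p (n - Suc i))))) =
      (\<Sum>i<n. dist (g (\<phi> (p i))) (g (\<phi> (p (Suc i)))))"
  proof -
    have "(\<Sum>i<n. dist (g (\<phi> (p (n - i)))) (g (\<phi> (p (n - Suc i))))) =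
        (\<Sum>i<n. (\<lambda>j. dist (g (\<phi> (p j))) (g (\<phi> (p (Suc j))))) (n - Suc i))"
      by (intro sum.cong refl) (simp add: Suc_diff_Suc dist_commute)
    also have "\<dots> = (\<Sum>i<n. dist (g (\<phi> (p i))) (g (\<phi> (p (Suc i)))))"
      by (rule sum.nat_diff_reindex)
    finally show ?thesis .
  qed
  ultimately show "ereal (\<Sum>i<fst np. dist (g (\<phi> (snd np i))) (g (\<phi> (snd np (Suc i))))) \<le> curve_length c d g"
    by simp
qed

lemma cl_const:
  assumes "\<And>x. a \<le> x \<Longrightarrow> x \<le> b \<Longrightarrow> g x = k"
  shows "curve_length a b g \<le> 0"
proof -
  have "curve_length a b g = curve_length a b (\<lambda>_. k)" by (rule cl_cong) (use assms in auto)
  also have "\<dots> \<le> ereal 0" by (rule cl_le) simp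
  finally show ?thesis by (simp add: zero_ereal_def)
qed

definition X1 :: "real \<Rightarrow> real \<Rightarrow> real" where
  "X1 a t = max 0 (min 1 ((t - a/3) / (1 - 2*a/3)))"
definition Y1 :: "real \<Rightarrow> real \<Rightarrow> real" where
  "Y1 a t = min a (min (3*t) (3*(1-t)))"
definition Y2 :: "real \<Rightarrow> real \<Rightarrow> real" where
  "Y2 b t = b * min 1 (min (3*t) (3*(1-t)))"

lemma X1_left: "0 \<le> a \<Longrightarrow> a \<le> 1 \<Longrightarrow> t \<le> a/3 \<Longrightarrow> X1 a t = 0"
proof -
  assume h: "0 \<le> a" "a \<le> 1" "t \<le> a/3"
  have "(t - a/3) / (1 - 2*a/3) \<le> 0" using h by (intro divide_nonpos_pos) auto
  then show ?thesis by (simp add: X1_def)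
qed

lemma X1_right: "0 \<le> a \<Longrightarrow> a \<le> 1 \<Longrightarrow> 1 - a/3 \<le> t \<Longrightarrow> X1 a t = 1"
proof -
  assume h: "0 \<le> a" "a \<le> 1" "1 - a/3 \<le> t"
  have "1 \<le> (t - a/3) / (1 - 2*a/3)" using h by (subst le_divide_eq) auto
  then show ?thesis by (simp add: X1_def)
qed

lemma X1_mid: "0 \<le> a \<Longrightarrow> a \<le> 1 \<Longrightarrow> a/3 \<le> t \<Longrightarrow> t \<le> 1 - a/3 \<Longrightarrow>
   X1 a t = (t - a/3) / (1 - 2*a/3)"
proof -
  assume h: "0 \<le> a" "a \<le> 1" "a/3 \<le> t" "t \<le> 1 - a/3"
  have "(t - a/3) / (1 - 2*a/3) \<le> 1" using h by (subst divide_le_eq) auto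
  moreover have "0 \<le> (t - a/3) / (1 - 2*a/3)" using h by (intro divide_nonneg_pos) auto
  ultimately show ?thesis by (simp add: X1_def)
qed

lemma X1_range: "0 \<le> X1 a t \<and> X1 a t \<le> 1" by (simp add: X1_def)

lemma S1_length:
  fixes H :: "real \<times> real \<Rightarrow> 'a::metric_space"
  assumes a: "0 \<le> a" "a \<le> 1"
    and Hl: "curve_length 0 1 (\<lambda>x. H (x, a)) \<le> ereal L"
    and Hw: "curve_length 0 1 (\<lambda>y. H (0, y)) \<le> ereal W"
    and Hc: "\<And>y. 0 \<le> y \<Longrightarrow> y \<le> 1 \<Longrightarrow> H (1, y) = H (0, y)"
  shows "curve_length 0 1 (\<lambda>t. H (X1 a t, Y1 a t)) \<le> ereal (L + 2 * W)"
proof -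
  define f where "f = (\<lambda>t. H (X1 a t, Y1 a t))"
  define u where "u = a/3"
  define v where "v = 1 - a/3"
  have uv: "0 \<le> u" "u \<le> v" "v \<le> 1" using a by (auto simp: u_def v_def)
  have W0a: "curve_length 0 a (\<lambda>y. H (0, y)) \<le> ereal W"
    using cl_mono_int[of 0 a 1] a Hw order_trans by blast
  have P1: "curve_length 0 u f \<le> ereal W"
  proof -
    have "curve_length 0 u f = curve_length 0 u (\<lambda>t. (\<lambda>y. H (0, y)) (3 * t))"
    proof (rule cl_cong)
      fix x assume x: "0 \<le> x" "x \<le> u"
      have "Y1 a x = 3 * x" using x a by (simp add: u_def Y1_def min_def)
      then show "f x = H (0, 3 * x)" using a x
        by (simp add: f_def X1_left u_def)
    qed
    also have "\<dots> \<le> curve_length 0 a (\<lambda>y. H (0, y))"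
      by (rule cl_reparam_inc) (auto simp: u_def)
    finally show ?thesis using W0a by simp
  qed
  have P2: "curve_length u v f \<le> ereal L"
  proof -
    have "curve_length u v f = curve_length u v (\<lambda>t. (\<lambda>x. H (x, a)) ((t - u) / (1 - 2*a/3)))"
    proof (rule cl_cong)
      fix x assume "u \<le> x" "x \<le> v"
      then show "f x = H ((x - u) / (1 - 2*a/3), a)" using a
        by (simp add: f_def X1_mid u_def v_def Y1_def min_def)
    qed
    also have "\<dots> \<le> curve_length 0 1 (\<lambda>x. H (x, a))"
    proof (rule cl_reparam_inc)
      fix x y assume "u \<le> x" "x \<le> y" "y \<le> v"
      then show "(x - u) / (1 - 2*a/3) \<le> (y - u) / (1 - 2*a/3)"
        using a by (intro divide_right_mono) auto
    qed (use a in \<open>auto simp: u_def v_def\<close>)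
    finally show ?thesis using Hl by simp
  qed
  have P3: "curve_length v 1 f \<le> ereal W"
  proof -
    have "curve_length v 1 f = curve_length v 1 (\<lambda>t. (\<lambda>y. H (0, y)) (3 * (1 - t)))"
    proof (rule cl_cong)
      fix x assume x: "v \<le> x" "x \<le> 1"
      have "Y1 a x = 3 * (1 - x)" using x a by (simp add: v_def Y1_def min_def)
      then show "f x = H (0, 3 * (1 - x))" using a x
        by (simp add: f_def X1_right v_def Hc)
    qed
    also have "\<dots> \<le> curve_length 0 a (\<lambda>y. H (0, y))"
      by (rule cl_reparam_dec) (auto simp: v_def)
    finally show ?thesis using W0a by simp
  qed
  have "curve_length 0 1 f \<le> curve_length 0 u f + curve_length u 1 f"
    using cl_split[of 0 u 1 f] uv by simp
  also have "\<dots> \<le> curve_length 0 u f + (curve_length u v f + curve_length v 1 f)"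
    using cl_split[of u v 1 f] uv by (intro add_left_mono) simp
  also have "\<dots> \<le> ereal W + (ereal L + ereal W)"
    by (intro add_mono P1 P2 P3)
  finally show ?thesis by (simp add: f_def add.commute)
qed

lemma S2_length:
  fixes H :: "real \<times> real \<Rightarrow> 'a::metric_space"
  assumes b: "0 \<le> b" "b \<le> 1" and L0: "0 \<le> L"
    and Hw: "curve_length 0 1 (\<lambda>y. H (0, y)) \<le> ereal W"
  shows "curve_length 0 1 (\<lambda>t. H (0, Y2 b t)) \<le> ereal (L + 2 * W)"
proof -
  define f where "f = (\<lambda>t. H (0, Y2 b t))"
  have W0b: "curve_length 0 b (\<lambda>y. H (0, y)) \<le> ereal W"
    using cl_mono_int[of 0 b 1] b Hw order_trans by blast
  have P1: "curve_length 0 (1/3) f \<le> ereal W"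
  proof -
    have "curve_length 0 (1/3) f = curve_length 0 (1/3) (\<lambda>t. (\<lambda>y. H (0, y)) (b * (3 * t)))"
    proof (rule cl_cong)
      fix x :: real assume x: "0 \<le> x" "x \<le> 1/3"
      have "Y2 b x = b * (3 * x)" using x by (simp add: Y2_def min_def)
      then show "f x = H (0, b * (3 * x))" by (simp add: f_def)
    qed
    also have "\<dots> \<le> curve_length 0 b (\<lambda>y. H (0, y))"
      by (rule cl_reparam_inc) (use b in \<open>auto intro: mult_left_mono mult_right_mono\<close>)
    finally show ?thesis using W0b by simp
  qed
  have P2: "curve_length (1/3) (2/3) f \<le> 0"
    by (rule cl_const[where k = "H (0, b)"]) (simp add: f_def Y2_def min_def)
  have P3: "curve_length (2/3) 1 f \<le> ereal W"
  proof -
    have "curve_length (2/3) 1 f = curve_length (2/3) 1 (\<lambda>t. (\<lambda>y. H (0, y)) (b * (3 * (1 - t))))"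
    proof (rule cl_cong)
      fix x :: real assume x: "2/3 \<le> x" "x \<le> 1"
      have "Y2 b x = b * (3 * (1 - x))" using x by (simp add: Y2_def min_def)
      then show "f x = H (0, b * (3 * (1 - x)))" by (simp add: f_def)
    qed
    also have "\<dots> \<le> curve_length 0 b (\<lambda>y. H (0, y))"
      by (rule cl_reparam_dec) (use b in \<open>auto intro: mult_left_mono mult_right_mono\<close>)
    finally show ?thesis using W0b by simp
  qed
  have "curve_length 0 1 f \<le> curve_length 0 (1/3) f + curve_length (1/3) 1 f"
    using cl_split[of 0 "1/3" 1 f] by simp
  also have "\<dots> \<le> curve_length 0 (1/3) f + (curve_length (1/3) (2/3) f + curve_length (2/3) 1 f)"
    using cl_split[of "1/3" "2/3" 1 f] by (intro add_left_mono) simp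
  also have "\<dots> \<le> ereal W + (0 + ereal W)"
    by (intro add_mono P1 P2 P3)
  also have "\<dots> \<le> ereal (L + 2 * W)" using L0 by simp
  finally show ?thesis by (simp add: f_def)
qed

theorem mainTheorem6:
  fixes M :: "'a::metric_space set"
    and \<gamma> :: "real \<Rightarrow> 'a"
    and H :: "real \<times> real \<Rightarrow> 'a"
    and L W :: real
  assumes M_compact: "compact M"
    and \<gamma>_cont: "continuous_on {0..1} \<gamma>"
    and \<gamma>_in: "\<gamma> ` {0..1} \<subseteq> M"
    and \<gamma>_closed: "\<gamma> 0 = \<gamma> 1"
    and \<gamma>_length: "curve_length 0 1 \<gamma> = ereal L"
    and H_cont: "continuous_on ({0..1} \<times> {0..1}) H"
    and H_in: "H ` ({0..1} \<times> {0..1}) \<subseteq> M"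
    and H_start: "\<And>t. t \<in> {0..1} \<Longrightarrow> H (t, 0) = \<gamma> t"
    and H_closed: "\<And>\<tau>. \<tau> \<in> {0..1} \<Longrightarrow> H (0, \<tau>) = H (1, \<tau>)"
    and H_end: "\<exists>p. \<forall>t\<in>{0..1}. H (t, 1) = p"
    and H_lengths: "\<And>\<tau>. \<tau> \<in> {0..1} \<Longrightarrow> curve_length 0 1 (\<lambda>t. H (t, \<tau>)) \<le> ereal L"
    and H_width: "homotopy_width H = ereal W"
  shows "\<exists>G :: real \<times> real \<Rightarrow> 'a.
           continuous_on ({0..1} \<times> {0..1}) G \<and>
           G ` ({0..1} \<times> {0..1}) \<subseteq> M \<and>
           (\<forall>t\<in>{0..1}. G (t, 0) = \<gamma> t) \<and>
           (\<forall>t\<in>{0..1}. G (t, 1) = \<gamma> 0) \<and>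
           (\<forall>\<tau>\<in>{0..1}. G (0, \<tau>) = \<gamma> 0 \<and> G (1, \<tau>) = \<gamma> 0) \<and>
           (\<forall>\<tau>\<in>{0..1}. curve_length 0 1 (\<lambda>t. G (t, \<tau>)) \<le> ereal (L + 2 * W))"
proof -
  obtain p where p: "\<And>t. t \<in> {0..1} \<Longrightarrow> H (t, 1) = p" using H_end by blast
  have Hc: "\<And>y. 0 \<le> y \<Longrightarrow> y \<le> 1 \<Longrightarrow> H (1, y) = H (0, y)" using H_closed by simp
  have L0: "0 \<le> L" using cl_nonneg[of 0 1 \<gamma>] \<gamma>_length by simp
  have Hw: "curve_length 0 1 (\<lambda>y. H (0, y)) \<le> ereal W"
    using H_width unfolding homotopy_width_def
    by (metis atLeastAtMost_iff order_refl SUP_upper zero_le_one)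
  define G where "G = (\<lambda>z::real\<times>real. if snd z \<le> 1/2
      then H (X1 (2 * snd z) (fst z), Y1 (2 * snd z) (fst z))
      else H (0, Y2 (2 - 2 * snd z) (fst z)))"
  have Y1r: "0 \<le> Y1 a t \<and> Y1 a t \<le> 1" if "0 \<le> a" "a \<le> 1" "0 \<le> t" "t \<le> 1" for a t
    using that by (simp add: Y1_def)
  have Y2r: "0 \<le> Y2 b t \<and> Y2 b t \<le> 1" if "0 \<le> b" "b \<le> 1" "0 \<le> t" "t \<le> 1" for b t
  proof -
    have "0 \<le> min 1 (min (3*t) (3*(1-t)))" "min 1 (min (3*t) (3*(1-t))) \<le> 1" using that by auto
    then show ?thesis using that unfolding Y2_def by (simp add: mult_le_one)
  qed
  have half: "H (X1 1 t, Y1 1 t) = H (0, Y2 1 t)" if "0 \<le> t" "t \<le> 1" for t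
  proof -
    consider "t \<le> 1/3" | "2/3 \<le> t" | "1/3 \<le> t" "t \<le> 2/3" by linarith
    then show ?thesis
    proof cases
      case 1 then show ?thesis by (simp add: X1_left Y1_def Y2_def)
    next
      case 2
      have "X1 1 t = 1" using 2 by (intro X1_right) auto
      moreover have "Y1 1 t = Y2 1 t" by (simp add: Y1_def Y2_def)
      ultimately show ?thesis using Hc Y1r[of 1 t] that by simp
    next
      case 3
      have "Y1 1 t = 1" "Y2 1 t = 1" using 3 by (auto simp: Y1_def Y2_def min_def)
      then show ?thesis using p[of "X1 1 t"] p[of 0] X1_range[of 1 t] by simp
    qed
  qed
  have cont1: "continuous_on ({0..1} \<times> {0..1/2}) (\<lambda>z. H (X1 (2 * snd z) (fst z), Y1 (2 * snd z) (fst z)))"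
  proof (rule continuous_on_compose2[OF H_cont])
    show "continuous_on ({0..1} \<times> {0..1/2}) (\<lambda>z::real\<times>real. (X1 (2 * snd z) (fst z), Y1 (2 * snd z) (fst z)))"
      unfolding X1_def Y1_def by (intro continuous_intros) auto
    show "(\<lambda>z::real\<times>real. (X1 (2 * snd z) (fst z), Y1 (2 * snd z) (fst z))) ` ({0..1} \<times> {0..1/2}) \<subseteq> {0..1} \<times> {0..1}"
      using X1_range Y1r by auto
  qed
  have cont2: "continuous_on ({0..1} \<times> {1/2..1}) (\<lambda>z. H (0, Y2 (2 - 2 * snd z) (fst z)))"
  proof (rule continuous_on_compose2[OF H_cont])
    show "continuous_on ({0..1} \<times> {1/2..1}) (\<lambda>z::real\<times>real. (0, Y2 (2 - 2 * snd z) (fst z)))"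
      unfolding Y2_def by (intro continuous_intros)
    show "(\<lambda>z::real\<times>real. (0::real, Y2 (2 - 2 * snd z) (fst z))) ` ({0..1} \<times> {1/2..1}) \<subseteq> {0..1} \<times> {0..1}"
      using Y2r by auto
  qed
  have sq: "{0..1} \<times> {0..1} = ({0..1} \<times> {0..1/2}) \<union> ({0..1::real} \<times> {1/2..1::real})" by auto
  have contG: "continuous_on ({0..1} \<times> {0..1}) G"
    unfolding sq
  proof (rule continuous_on_closed_Un)
    show "continuous_on ({0..1} \<times> {0..1/2}) G"
      by (rule continuous_on_eq[OF cont1]) (auto simp: G_def)
    show "continuous_on ({0..1} \<times> {1/2..1}) G"
    proof (rule continuous_on_eq[OF cont2])
      fix z :: "real \<times> real" assume z: "z \<in> {0..1} \<times> {1/2..1}"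
      show "H (0, Y2 (2 - 2 * snd z) (fst z)) = G z"
      proof (cases "snd z = 1/2")
        case True
        then have e: "2 * snd z = 1" "2 - 2 * snd z = 1" by auto
        show ?thesis using half[of "fst z"] z True unfolding G_def e by auto
      next
        case False then show ?thesis using z by (auto simp: G_def)
      qed
    qed
  qed (auto intro: closed_Times)
  have inM: "G ` ({0..1} \<times> {0..1}) \<subseteq> M"
  proof
    fix w assume "w \<in> G ` ({0..1} \<times> {0..1})"
    then obtain t s where ts: "t \<in> {0..1}" "s \<in> {0..1}" "w = G (t, s)" by auto
    show "w \<in> M"
    proof (cases "s \<le> 1/2")
      case True
      then have "(X1 (2 * s) t, Y1 (2 * s) t) \<in> {0..1} \<times> {0..1}" using ts X1_range Y1r[of "2 * s" t] by auto
      then show ?thesis using H_in ts True by (auto simp: G_def)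
    next
      case False
      then have "(0::real, Y2 (2 - 2 * s) t) \<in> {0..1::real} \<times> {0..1::real}" using ts Y2r[of "2 - 2 * s" t] by auto
      then show ?thesis using H_in ts False by (auto simp: G_def)
    qed
  qed
  have bot: "\<forall>t\<in>{0..1}. G (t, 0) = \<gamma> t"
  proof
    fix t :: real assume t: "t \<in> {0..1}"
    then have "X1 0 t = t" "Y1 0 t = 0" by (auto simp: X1_def Y1_def)
    then show "G (t, 0) = \<gamma> t" using H_start t by (simp add: G_def)
  qed
  have top: "\<forall>t\<in>{0..1}. G (t, 1) = \<gamma> 0"
    using H_start[of 0] by (simp add: G_def Y2_def)
  have ends: "\<forall>\<tau>\<in>{0..1}. G (0, \<tau>) = \<gamma> 0 \<and> G (1, \<tau>) = \<gamma> 0"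
  proof
    fix s :: real assume s: "s \<in> {0..1}"
    show "G (0, s) = \<gamma> 0 \<and> G (1, s) = \<gamma> 0"
    proof (cases "s \<le> 1/2")
      case True
      have "X1 (2 * s) 0 = 0" "X1 (2 * s) 1 = 1" using s True by (auto intro: X1_left X1_right)
      moreover have "Y1 (2 * s) 0 = 0" "Y1 (2 * s) 1 = 0" using s by (auto simp: Y1_def)
      ultimately show ?thesis using True H_start[of 0] H_start[of 1] \<gamma>_closed by (simp add: G_def)
    next
      case False
      then show ?thesis using H_start[of 0] by (simp add: G_def Y2_def)
    qed
  qed
  have lens: "\<forall>\<tau>\<in>{0..1}. curve_length 0 1 (\<lambda>t. G (t, \<tau>)) \<le> ereal (L + 2 * W)"
  proof
    fix s :: real assume s: "s \<in> {0..1}"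
    show "curve_length 0 1 (\<lambda>t. G (t, s)) \<le> ereal (L + 2 * W)"
    proof (cases "s \<le> 1/2")
      case True
      have "curve_length 0 1 (\<lambda>t. H (X1 (2 * s) t, Y1 (2 * s) t)) \<le> ereal (L + 2 * W)"
        by (rule S1_length[OF _ _ H_lengths Hw Hc]) (use s True in auto)
      then show ?thesis using True by (simp add: G_def)
    next
      case False
      have "curve_length 0 1 (\<lambda>t. H (0, Y2 (2 - 2 * s) t)) \<le> ereal (L + 2 * W)"
        by (rule S2_length[OF _ _ L0 Hw]) (use s False in auto)
      then show ?thesis using False by (simp add: G_def)
    qed
  qed
  show ?thesis using contG inM bot top ends lens by blast
qed

end
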